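(* Let $f,g$ satisfy the standing assumptions below and let $\beta>0$. Suppose $\beta\ge\frac{M_fQ_g}{\mu^3}$ and $\Phi(x):=f(x,y^*(x))$ is bounded below on $\mathbb{R}^n$. Then $h(x,y)$ is bounded below on $\mathbb{R}^n\times\mathbb{R}^p$.
   Context: Standing assumptions. (A1) Constants $M_f,\mu,L_g,Q_g>0$ exist such that: $f:\mathbb{R}^n\times\mathbb{R}^p\to\mathbb{R}$ is $M_f$-Lipschitz; $g$ is twice differentiable with $\nabla^2_{yy}g\succeq\mu I_p$; $\nabla g$ is $L_g$-Lipschitz; $\nabla^2_{yy}g,\nabla^2_{xy}g$ are $Q_g$-Lipschitz; $\nabla^2_{yy}g$ is continuously differentiable. (A2) $f$ is a potential function of a conservative field $\mathcal{D}_f$ with compact convex values of norm at most $M_f$. Notation: $y^*(x):=\arg\min_{y\in\mathbb{R}^p}g(x,y)$ (unique); $\mathcal{A}(x,y):=y-\nabla^2_{yy}g(x,y)^{-1}\nabla_yg(x,y)$; $h(x,y):=f(x,\mathcal{A}(x,y))+\frac\beta2\|\nabla_yg(x,y)\|^2$. *)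

theory Defs
  imports "HOL-Analysis.Analysis"
begin

definition grad :: "('a::real_inner \<Rightarrow> real) \<Rightarrow> 'a \<Rightarrow> 'a" where
  "grad g z = (THE v. (g has_derivative (\<lambda>h. v \<bullet> h)) (at z))"

definition hess :: "('a::real_inner \<Rightarrow> real) \<Rightarrow> 'a \<Rightarrow> 'a \<Rightarrow> 'a" where
  "hess g z = (THE L. (grad g has_derivative L) (at z))"

definition twice_differentiable :: "('a::real_inner \<Rightarrow> real) \<Rightarrow> bool" where
  "twice_differentiable g \<longleftrightarrow>
     (\<forall>z. g differentiable (at z)) \<and> (\<forall>z. grad g differentiable (at z))"

definition grad_y :: "((real^'n) \<times> (real^'p) \<Rightarrow> real) \<Rightarrow> real^'n \<Rightarrow> real^'p \<Rightarrow> real^'p" where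
  "grad_y g x y = snd (grad g (x, y))"

definition hess_yy :: "((real^'n) \<times> (real^'p) \<Rightarrow> real) \<Rightarrow> real^'n \<Rightarrow> real^'p \<Rightarrow> real^'p^'p" where
  "hess_yy g x y = matrix (\<lambda>v. snd (hess g (x, y) (0, v)))"

definition hess_xy :: "((real^'n) \<times> (real^'p) \<Rightarrow> real) \<Rightarrow> real^'n \<Rightarrow> real^'p \<Rightarrow> real^'n^'p" where
  "hess_xy g x y = matrix (\<lambda>u. snd (hess g (x, y) (u, 0)))"

definition ystar :: "((real^'n) \<times> (real^'p) \<Rightarrow> real) \<Rightarrow> real^'n \<Rightarrow> real^'p" where
  "ystar g x = (THE y. \<forall>y'. g (x, y) \<le> g (x, y'))"

definition Aop :: "((real^'n) \<times> (real^'p) \<Rightarrow> real) \<Rightarrow> real^'n \<Rightarrow> real^'p \<Rightarrow> real^'p" where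
  "Aop g x y = y - matrix_inv (hess_yy g x y) *v grad_y g x y"

definition hfun :: "((real^'n) \<times> (real^'p) \<Rightarrow> real) \<Rightarrow> ((real^'n) \<times> (real^'p) \<Rightarrow> real) \<Rightarrow> real
                    \<Rightarrow> real^'n \<Rightarrow> real^'p \<Rightarrow> real" where
  "hfun f g \<beta> x y = f (x, Aop g x y) + \<beta> / 2 * (norm (grad_y g x y))\<^sup>2"

definition abs_continuous_on :: "real set \<Rightarrow> (real \<Rightarrow> 'a::real_normed_vector) \<Rightarrow> bool" where
  "abs_continuous_on S \<gamma> \<longleftrightarrow>
     (\<forall>\<epsilon>>0. \<exists>\<delta>>0. \<forall>(n::nat) a b.
        (\<forall>i<n. a i \<le> b i \<and> a i \<in> S \<and> b i \<in> S) \<and>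
        (\<forall>i<n. \<forall>j<n. i \<noteq> j \<longrightarrow> b i \<le> a j \<or> b j \<le> a i) \<and>
        (\<Sum>i<n. b i - a i) < \<delta>
        \<longrightarrow> (\<Sum>i<n. norm (\<gamma> (b i) - \<gamma> (a i))) < \<epsilon>)"

definition conservative_field :: "('a::euclidean_space \<Rightarrow> 'a set) \<Rightarrow> bool" where
  "conservative_field D \<longleftrightarrow>
     closed {(z, v). v \<in> D z} \<and>
     (\<forall>z. D z \<noteq> {} \<and> compact (D z)) \<and>
     (\<forall>\<gamma>. abs_continuous_on {0..1} \<gamma> \<and> \<gamma> 0 = \<gamma> 1 \<longrightarrow>
        ((\<lambda>t. Sup ((\<lambda>v. vector_derivative \<gamma> (at t within {0..1}) \<bullet> v) ` D (\<gamma> t)))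
           has_integral 0) {0..1})"

definition potential_of :: "('a::euclidean_space \<Rightarrow> real) \<Rightarrow> ('a \<Rightarrow> 'a set) \<Rightarrow> bool" where
  "potential_of f D \<longleftrightarrow>
     conservative_field D \<and>
     (\<forall>\<gamma>. abs_continuous_on {0..1} \<gamma> \<longrightarrow>
        ((\<lambda>t. Sup ((\<lambda>v. vector_derivative \<gamma> (at t within {0..1}) \<bullet> v) ` D (\<gamma> t)))
           has_integral (f (\<gamma> 1) - f (\<gamma> 0))) {0..1})"

end

theory Submission
  imports Defs
begin

lemma grad_works:
  fixes g :: "'a::euclidean_space \<Rightarrow> real"
  assumes "g differentiable (at z)"
  shows "(g has_derivative (\<lambda>h. grad g z \<bullet> h)) (at z)"
proof -
  obtain D where D: "(g has_derivative D) (at z)" using assms differentiable_def by blast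
  have lin: "linear D" using D has_derivative_linear by blast
  define v where "v = adjoint D 1"
  have Dv: "D = (\<lambda>h. v \<bullet> h)"
    using adjoint_works[OF lin, of _ 1] by (auto simp: v_def inner_commute)
  have "grad g z = v" unfolding grad_def
  proof (rule the_equality)
    show "(g has_derivative (\<lambda>h. v \<bullet> h)) (at z)" using D Dv by simp
  next
    fix w assume "(g has_derivative (\<lambda>h. w \<bullet> h)) (at z)"
    then have "(\<lambda>h. w \<bullet> h) = (\<lambda>h. v \<bullet> h)" using D Dv has_derivative_unique by blast
    then have "w \<bullet> (w - v) = v \<bullet> (w - v)" by metis
    then have "(w - v) \<bullet> (w - v) = 0" by (simp add: inner_diff_left)
    then show "w = v" by simp
  qed
  then show ?thesis using D Dv by simp
qed

lemma hess_works:
  fixes g :: "'a::euclidean_space \<Rightarrow> real"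
  assumes "grad g differentiable (at z)"
  shows "(grad g has_derivative hess g z) (at z)"
proof -
  obtain D where D: "(grad g has_derivative D) (at z)" using assms differentiable_def by blast
  show ?thesis unfolding hess_def
    by (rule theI[of _ D]) (use D has_derivative_unique in auto)
qed

lemma G_deriv:
  fixes g :: "(real^'n) \<times> (real^'p) \<Rightarrow> real"
  assumes "twice_differentiable g"
  shows "((\<lambda>y. g (x, y)) has_derivative (\<lambda>v. grad_y g x y \<bullet> v)) (at y)"
proof -
  have d1: "((\<lambda>y. (x, y)) has_derivative (\<lambda>v. (0, v))) (at y)"
    by (auto intro!: derivative_eq_intros)
  have d2: "(g has_derivative (\<lambda>h. grad g (x, y) \<bullet> h)) (at (x, y))"
    using assms grad_works unfolding twice_differentiable_def by blast
  from has_derivative_compose[OF d1 d2] show ?thesis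
    by (simp add: grad_y_def inner_Pair_0)
qed

lemma grady_deriv:
  fixes g :: "(real^'n) \<times> (real^'p) \<Rightarrow> real"
  assumes "twice_differentiable g"
  shows "(grad_y g x has_derivative (\<lambda>v. hess_yy g x y *v v)) (at y)"
proof -
  have d1: "((\<lambda>y. (x, y)) has_derivative (\<lambda>v. (0, v))) (at y)"
    by (auto intro!: derivative_eq_intros)
  have d2: "(grad g has_derivative hess g (x, y)) (at (x, y))"
    using assms hess_works unfolding twice_differentiable_def by blast
  from has_derivative_compose[OF d1 d2] have
    "((\<lambda>y. grad g (x, y)) has_derivative (\<lambda>v. hess g (x, y) (0, v))) (at y)" .
  from has_derivative_snd[OF this] have d3:
    "(grad_y g x has_derivative (\<lambda>v. snd (hess g (x, y) (0, v)))) (at y)"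
    by (simp add: grad_y_def[abs_def])
  then have "linear (\<lambda>v. snd (hess g (x, y) (0, v)))" using has_derivative_linear by blast
  then have "(\<lambda>v. hess_yy g x y *v v) = (\<lambda>v. snd (hess g (x, y) (0, v)))"
    unfolding hess_yy_def by (simp add: matrix_works)
  then show ?thesis using d3 by simp
qed

lemma grady_mono:
  fixes g :: "(real^'n) \<times> (real^'p) \<Rightarrow> real"
  assumes "twice_differentiable g"
    and strong: "\<And>x y v. v \<bullet> (hess_yy g x y *v v) \<ge> \<mu> * (norm v)\<^sup>2"
  shows "(grad_y g x y2 - grad_y g x y1) \<bullet> (y2 - y1) \<ge> \<mu> * (norm (y2 - y1))\<^sup>2"
proof -
  define d where "d = y2 - y1"
  define \<phi> where "\<phi> t = grad_y g x (y1 + t *\<^sub>R d) \<bullet> d - t * (\<mu> * (norm d)\<^sup>2)" for t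
  have "\<phi> 0 \<le> \<phi> 1"
  proof (rule DERIV_nonneg_imp_nondecreasing[of 0 1 \<phi>])
    fix t :: real
    have l: "((\<lambda>t. y1 + t *\<^sub>R d) has_derivative (\<lambda>s. s *\<^sub>R d)) (at t)"
      by (auto intro!: derivative_eq_intros)
    have "((\<lambda>t. grad_y g x (y1 + t *\<^sub>R d)) has_derivative
        (\<lambda>s. hess_yy g x (y1 + t *\<^sub>R d) *v (s *\<^sub>R d))) (at t)"
      by (rule has_derivative_compose[OF l grady_deriv[OF assms(1)]])
    then have "(\<phi> has_derivative (\<lambda>s. (hess_yy g x (y1 + t *\<^sub>R d) *v (s *\<^sub>R d)) \<bullet> d - s * (\<mu> * (norm d)\<^sup>2))) (at t)"
      unfolding \<phi>_def[abs_def] by (auto intro!: derivative_eq_intros)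
    also have "(\<lambda>s. (hess_yy g x (y1 + t *\<^sub>R d) *v (s *\<^sub>R d)) \<bullet> d - s * (\<mu> * (norm d)\<^sup>2))
       = (\<lambda>s. s * ((hess_yy g x (y1 + t *\<^sub>R d) *v d) \<bullet> d - \<mu> * (norm d)\<^sup>2))"
      by (auto simp: matrix_vector_mult_scaleR algebra_simps)
    finally have "DERIV \<phi> t :> ((hess_yy g x (y1 + t *\<^sub>R d) *v d) \<bullet> d - \<mu> * (norm d)\<^sup>2)"
      by (simp add: has_field_derivative_def mult_commute_abs)
    moreover have "(hess_yy g x (y1 + t *\<^sub>R d) *v d) \<bullet> d - \<mu> * (norm d)\<^sup>2 \<ge> 0"
      using strong[of d x "y1 + t *\<^sub>R d"] by (simp add: inner_commute)
    ultimately show "\<exists>y. DERIV \<phi> t :> y \<and> y \<ge> 0" by blast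
  qed simp
  moreover have "y1 + 1 *\<^sub>R d = y2" by (simp add: d_def)
  ultimately have "grad_y g x y1 \<bullet> d \<le> grad_y g x y2 \<bullet> d - \<mu> * (norm d)\<^sup>2"
    by (simp add: \<phi>_def)
  then show ?thesis by (simp add: d_def[symmetric] inner_diff_left)
qed

lemma G_lower:
  fixes g :: "(real^'n) \<times> (real^'p) \<Rightarrow> real"
  assumes "twice_differentiable g"
    and strong: "\<And>x y v. v \<bullet> (hess_yy g x y *v v) \<ge> \<mu> * (norm v)\<^sup>2"
  shows "g (x, y1 + d) \<ge> g (x, y1) + grad_y g x y1 \<bullet> d + \<mu> / 2 * (norm d)\<^sup>2"
proof -
  define \<psi> where "\<psi> t = g (x, y1 + t *\<^sub>R d) - t * (grad_y g x y1 \<bullet> d) - \<mu> / 2 * t\<^sup>2 * (norm d)\<^sup>2" for t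
  have "\<psi> 0 \<le> \<psi> 1"
  proof (rule DERIV_nonneg_imp_nondecreasing[of 0 1 \<psi>])
    fix t :: real
    assume t: "0 \<le> t" "t \<le> 1"
    have l: "((\<lambda>t. y1 + t *\<^sub>R d) has_derivative (\<lambda>s. s *\<^sub>R d)) (at t)"
      by (auto intro!: derivative_eq_intros)
    have "((\<lambda>t. g (x, y1 + t *\<^sub>R d)) has_derivative
        (\<lambda>s. grad_y g x (y1 + t *\<^sub>R d) \<bullet> (s *\<^sub>R d))) (at t)"
      by (rule has_derivative_compose[OF l G_deriv[OF assms(1)]])
    then have "(\<psi> has_derivative (\<lambda>s. grad_y g x (y1 + t *\<^sub>R d) \<bullet> (s *\<^sub>R d)
         - s * (grad_y g x y1 \<bullet> d) - \<mu> / 2 * (2 * t * s) * (norm d)\<^sup>2)) (at t)"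
      unfolding \<psi>_def[abs_def] by (auto intro!: derivative_eq_intros simp: algebra_simps)
    also have "(\<lambda>s. grad_y g x (y1 + t *\<^sub>R d) \<bullet> (s *\<^sub>R d)
         - s * (grad_y g x y1 \<bullet> d) - \<mu> / 2 * (2 * t * s) * (norm d)\<^sup>2)
       = (\<lambda>s. s * (grad_y g x (y1 + t *\<^sub>R d) \<bullet> d - grad_y g x y1 \<bullet> d - \<mu> * t * (norm d)\<^sup>2))"
      by (auto simp: algebra_simps)
    finally have D: "DERIV \<psi> t :> (grad_y g x (y1 + t *\<^sub>R d) \<bullet> d - grad_y g x y1 \<bullet> d - \<mu> * t * (norm d)\<^sup>2)"
      by (simp add: has_field_derivative_def mult_commute_abs)
    have "grad_y g x (y1 + t *\<^sub>R d) \<bullet> d - grad_y g x y1 \<bullet> d - \<mu> * t * (norm d)\<^sup>2 \<ge> 0"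
    proof (cases "t = 0")
      case True then show ?thesis by simp
    next
      case False
      with t have tp: "t > 0" by simp
      have "(grad_y g x (y1 + t *\<^sub>R d) - grad_y g x y1) \<bullet> ((y1 + t *\<^sub>R d) - y1) \<ge> \<mu> * (norm ((y1 + t *\<^sub>R d) - y1))\<^sup>2"
        by (rule grady_mono[OF assms])
      then have "t * (grad_y g x (y1 + t *\<^sub>R d) \<bullet> d - grad_y g x y1 \<bullet> d) \<ge> t * (\<mu> * t * (norm d)\<^sup>2)"
        using tp by (simp add: inner_diff_left power2_eq_square algebra_simps)
      then have "grad_y g x (y1 + t *\<^sub>R d) \<bullet> d - grad_y g x y1 \<bullet> d \<ge> \<mu> * t * (norm d)\<^sup>2"
        using tp by (simp add: mult_le_cancel_left)
      then show ?thesis by simp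
    qed
    with D show "\<exists>y. DERIV \<psi> t :> y \<and> y \<ge> 0" by blast
  qed simp
  then show ?thesis by (simp add: \<psi>_def)
qed

lemma crit_zero:
  fixes g :: "(real^'n) \<times> (real^'p) \<Rightarrow> real"
  assumes "twice_differentiable g"
    and "\<forall>y'. g (x, y) \<le> g (x, y')"
  shows "grad_y g x y = 0"
proof -
  have "(\<lambda>v. grad_y g x y \<bullet> v) = (\<lambda>v. 0)"
    by (rule differential_zero_maxmin[of y UNIV "\<lambda>y. g (x, y)"])
       (use assms G_deriv[OF assms(1)] in auto)
  then have "grad_y g x y \<bullet> grad_y g x y = 0" by metis
  then show ?thesis by simp
qed

lemma ystar_crit:
  fixes g :: "(real^'n) \<times> (real^'p) \<Rightarrow> real"
  assumes tw: "twice_differentiable g"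
    and strong: "\<And>x y v. v \<bullet> (hess_yy g x y *v v) \<ge> \<mu> * (norm v)\<^sup>2"
    and mu: "\<mu> > 0"
  shows "grad_y g x (ystar g x) = 0"
proof -
  define G where "G y = g (x, y)" for y
  define a where "a = norm (grad_y g x 0)"
  define R where "R = 2 * a / \<mu> + 1"
  have cont: "continuous_on (cball 0 R) G"
    unfolding G_def
    by (rule continuous_at_imp_continuous_on)
       (use has_derivative_continuous[OF G_deriv[OF tw]] in blast)
  have "a \<ge> 0" by (simp add: a_def)
  then have "R > 0" using mu by (simp add: R_def add_nonneg_pos)
  then obtain y0 where y0: "y0 \<in> cball 0 R" "\<forall>y\<in>cball 0 R. G y0 \<le> G y"
    using continuous_attains_inf[OF compact_cball _ cont] by fastforce
  have glob: "\<forall>y'. g (x, y0) \<le> g (x, y')"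
  proof
    fix y
    show "g (x, y0) \<le> g (x, y)"
    proof (cases "y \<in> cball 0 R")
      case True then show ?thesis using y0 by (simp add: G_def)
    next
      case False
      then have ny: "norm y > R" by simp
      have "G y \<ge> G 0 + grad_y g x 0 \<bullet> y + \<mu> / 2 * (norm y)\<^sup>2"
        using G_lower[OF tw strong, of x 0 y] by (simp add: G_def)
      moreover have "grad_y g x 0 \<bullet> y \<ge> - a * norm y"
        using norm_cauchy_schwarz[of "grad_y g x 0" y] Cauchy_Schwarz_ineq2[of "grad_y g x 0" y]
        by (simp add: a_def abs_le_iff)
      moreover have "\<mu> / 2 * (norm y)\<^sup>2 - a * norm y > 0"
      proof -
        have "norm y > 2 * a / \<mu>" using ny by (simp add: R_def)
        then have "\<mu> * norm y > 2 * a" using mu by (simp add: field_simps)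
        moreover have "norm y > 0" using ny \<open>R > 0\<close> by linarith
        ultimately have "norm y * (\<mu> * norm y - 2 * a) > 0" by simp
        then show ?thesis by (simp add: power2_eq_square algebra_simps)
      qed
      ultimately have "G y > G 0" by linarith
      moreover have "G y0 \<le> G 0" using y0 \<open>R > 0\<close> by simp
      ultimately show ?thesis by (simp add: G_def)
    qed
  qed
  have "ystar g x = y0" unfolding ystar_def
  proof (rule the_equality)
    show "\<forall>y'. g (x, y0) \<le> g (x, y')" by (rule glob)
  next
    fix y assume "\<forall>y'. g (x, y) \<le> g (x, y')"
    then have "grad_y g x y = 0" by (rule crit_zero[OF tw])
    moreover have "grad_y g x y0 = 0" by (rule crit_zero[OF tw glob])
    moreover have "(grad_y g x y - grad_y g x y0) \<bullet> (y - y0) \<ge> \<mu> * (norm (y - y0))\<^sup>2"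
      by (rule grady_mono[OF tw strong])
    ultimately have "\<mu> * (norm (y - y0))\<^sup>2 \<le> 0" by simp
    then have "norm (y - y0) = 0" using mu
      by (simp add: mult_le_0_iff)
    then show "y = y0" by simp
  qed
  then show ?thesis using crit_zero[OF tw glob] by simp
qed

lemma quad_aux:
  fixes \<mu> n t :: real
  assumes "\<mu> > 0" "0 \<le> n" "0 \<le> t" "\<mu> * n\<^sup>2 \<le> n * t"
  shows "n \<le> t / \<mu>"
proof (cases "n = 0")
  case True then show ?thesis using assms by simp
next
  case False
  then have "n > 0" using assms by simp
  then have "\<mu> * n \<le> t" using assms(4) by (simp add: power2_eq_square algebra_simps)
  then show ?thesis using assms(1) by (simp add: field_simps)
qed

lemma quad_lower:
  fixes \<beta> k t :: real
  assumes "\<beta> > 0"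
  shows "- k * t + \<beta> / 2 * t\<^sup>2 \<ge> - (k\<^sup>2 / (2 * \<beta>))"
proof -
  have "0 \<le> (\<beta> * t - k)\<^sup>2" by simp
  then have "0 \<le> \<beta>\<^sup>2 * t\<^sup>2 - 2 * \<beta> * k * t + k\<^sup>2" by (simp add: power2_eq_square algebra_simps)
  then have "0 \<le> (\<beta>\<^sup>2 * t\<^sup>2 - 2 * \<beta> * k * t + k\<^sup>2) / (2 * \<beta>)" using assms by simp
  also have "\<dots> = - k * t + \<beta> / 2 * t\<^sup>2 + k\<^sup>2 / (2 * \<beta>)"
    using assms by (simp add: field_simps power2_eq_square)
  finally show ?thesis by simp
qed

theorem proposition3p3:
  fixes f g :: "(real^'n) \<times> (real^'p) \<Rightarrow> real"
    and Df :: "(real^'n) \<times> (real^'p) \<Rightarrow> ((real^'n) \<times> (real^'p)) set"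
    and M\<^sub>f \<mu> L\<^sub>g Q\<^sub>g \<beta> :: real
  assumes consts_pos: "M\<^sub>f > 0" "\<mu> > 0" "L\<^sub>g > 0" "Q\<^sub>g > 0"
    and f_lip: "M\<^sub>f-lipschitz_on UNIV f"
    and g_twice: "twice_differentiable g"
    and g_strong: "\<And>x y v. v \<bullet> (hess_yy g x y *v v) \<ge> \<mu> * (norm v)\<^sup>2"
    and grad_lip: "L\<^sub>g-lipschitz_on UNIV (grad g)"
    and hyy_lip: "\<And>x y x' y'. onorm (\<lambda>v. (hess_yy g x y - hess_yy g x' y') *v v)
                              \<le> Q\<^sub>g * dist (x, y) (x', y')"
    and hxy_lip: "\<And>x y x' y'. onorm (\<lambda>u. (hess_xy g x y - hess_xy g x' y') *v u)
                              \<le> Q\<^sub>g * dist (x, y) (x', y')"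
    and hyy_C1: "\<exists>D. (\<forall>z. ((\<lambda>z. hess_yy g (fst z) (snd z)) has_derivative D z) (at z))
                    \<and> continuous_on UNIV (\<lambda>z. Blinfun (D z))"
    and f_pot: "potential_of f Df"
    and Df_vals: "\<And>z. convex (Df z) \<and> (\<forall>v\<in>Df z. norm v \<le> M\<^sub>f)"
    and beta_pos: "\<beta> > 0"
    and beta_ge: "\<beta> \<ge> M\<^sub>f * Q\<^sub>g / \<mu> ^ 3"
    and Phi_bdd: "\<exists>c. \<forall>x. c \<le> f (x, ystar g x)"
  shows "\<exists>c. \<forall>x y. c \<le> hfun f g \<beta> x y"
proof -
  obtain c where c: "\<forall>x. c \<le> f (x, ystar g x)" using Phi_bdd by blast
  define k where "k = M\<^sub>f * (2 / \<mu>)"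
  have "c - k\<^sup>2 / (2 * \<beta>) \<le> hfun f g \<beta> x y" for x y
  proof -
    define ys where "ys = ystar g x"
    define gv where "gv = grad_y g x y"
    define t where "t = norm gv"
    define H where "H = hess_yy g x y"
    have mu: "\<mu> > 0" using consts_pos by simp
    have z: "grad_y g x ys = 0" unfolding ys_def by (rule ystar_crit[OF g_twice g_strong mu])
    have "(grad_y g x y - grad_y g x ys) \<bullet> (y - ys) \<ge> \<mu> * (norm (y - ys))\<^sup>2"
      by (rule grady_mono[OF g_twice g_strong])
    then have "\<mu> * (norm (y - ys))\<^sup>2 \<le> norm (y - ys) * t"
      using norm_cauchy_schwarz[of gv "y - ys"] z
      by (simp add: gv_def t_def mult.commute)
    then have d1: "norm (y - ys) \<le> t / \<mu>"
      using quad_aux[OF mu] by (simp add: t_def)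
    have ker: "\<forall>w. H *v w = 0 \<longrightarrow> w = 0"
    proof (intro allI impI)
      fix w assume "H *v w = 0"
      then have "\<mu> * (norm w)\<^sup>2 \<le> 0" using g_strong[of w x y] by (simp add: H_def)
      then show "w = 0" using mu by (simp add: mult_le_0_iff)
    qed
    then obtain B where "B ** H = mat 1" using matrix_left_invertible_ker by blast
    then have "H ** B = mat 1" using matrix_left_right_inverse by blast
    with \<open>B ** H = mat 1\<close> have "invertible H" unfolding invertible_def by blast
    then have HI: "H ** matrix_inv H = mat 1"
      unfolding invertible_def matrix_inv_def by (rule someI_ex[THEN conjunct1])
    define w where "w = matrix_inv H *v gv"
    have Hw: "H *v w = gv" unfolding w_def
      by (simp add: matrix_vector_mul_assoc HI)
    have "\<mu> * (norm w)\<^sup>2 \<le> w \<bullet> gv" using g_strong[of w x y] Hw by (simp add: H_def)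
    also have "\<dots> \<le> norm w * t" using norm_cauchy_schwarz[of w gv] by (simp add: t_def)
    finally have d2: "norm w \<le> t / \<mu>" using quad_aux[OF mu] by (simp add: t_def)
    have A: "Aop g x y = y - w" by (simp add: Aop_def w_def H_def gv_def)
    have "norm (Aop g x y - ys) \<le> norm (y - ys) + norm w"
      unfolding A using norm_triangle_ineq4[of "y - ys" w] by (simp add: algebra_simps)
    also have "\<dots> \<le> 2 * t / \<mu>" proof -
      have "2 * t / \<mu> = t / \<mu> + t / \<mu>" by (simp add: field_simps)
      then show ?thesis using d1 d2 by linarith
    qed
    finally have dA: "norm (Aop g x y - ys) \<le> 2 * t / \<mu>" .
    have "dist (f (x, Aop g x y)) (f (x, ys)) \<le> M\<^sub>f * dist (x, Aop g x y) (x, ys)"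
      by (rule lipschitz_onD[OF f_lip]) auto
    also have "dist (x, Aop g x y) (x, ys) = norm (Aop g x y - ys)"
      by (simp add: dist_Pair_Pair dist_norm)
    finally have "f (x, ys) - f (x, Aop g x y) \<le> M\<^sub>f * norm (Aop g x y - ys)"
      by (simp add: dist_real_def)
    also have "\<dots> \<le> M\<^sub>f * (2 * t / \<mu>)"
      using mult_left_mono[OF dA, of "M\<^sub>f"] consts_pos by simp
    finally have "f (x, Aop g x y) \<ge> f (x, ys) - k * t" by (simp add: k_def)
    moreover have "f (x, ys) \<ge> c" using c by (simp add: ys_def)
    moreover have "- k * t + \<beta> / 2 * t\<^sup>2 \<ge> - (k\<^sup>2 / (2 * \<beta>))" by (rule quad_lower[OF beta_pos])
    ultimately show ?thesis by (simp add: hfun_def t_def gv_def)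
  qed
  then show ?thesis by blast
qed

end
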